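(* Let $d\ge2$, $k\in\{1,\dots,d-1\}$, and let $\mathbf r=(r_1,r_2,r_3)\in(0,\infty)^3$ be strictly admissible. For every $y_3\in\mathbb R^{d-k}$ with $|y_3|<r_3$, the set $S(y_3)$ of all $(y_1,y_2)\in\mathbb R^{d-k}\times\mathbb R^{d-k}$ satisfying $|y_j|<r_j$ ($j=1,2$), $y_1+y_2+y_3=0$, and such that $\big((r_j^2-|y_j|^2)^{1/2}\big)_{1\le j\le3}$ is strictly admissible, is nonempty and has positive $(d-k)$-dimensional Lebesgue measure. Moreover this measure is a lower semicontinuous function of $(y_3,\mathbf r)$ on the set of pairs with $\mathbf r$ strictly admissible and $|y_3|<r_3$.
   Context: A triple $(s_1,s_2,s_3)$ of positive reals is strictly admissible if $s_k<s_i+s_j$ for every permutation $(i,j,k)$ of $(1,2,3)$. The $(d-k)$-dimensional measure of $S(y_3)$ is the Lebesgue measure of its projection $\{y_1:(y_1,y_2)\in S(y_3)\}$ (equivalently onto $y_2$), since $y_2=-y_1-y_3$. *)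

theory Defs
  imports "HOL-Analysis.Analysis"
begin

definition strictly_admissible :: "real \<Rightarrow> real \<Rightarrow> real \<Rightarrow> bool" where
  "strictly_admissible s1 s2 s3 \<longleftrightarrow>
     0 < s1 \<and> 0 < s2 \<and> 0 < s3 \<and> s3 < s1 + s2 \<and> s1 < s2 + s3 \<and> s2 < s1 + s3"

definition S_set :: "real \<Rightarrow> real \<Rightarrow> real \<Rightarrow> 'a::euclidean_space \<Rightarrow> ('a \<times> 'a) set" where
  "S_set r1 r2 r3 y3 = {(y1, y2). norm y1 < r1 \<and> norm y2 < r2 \<and> y1 + y2 + y3 = 0 \<and>
     strictly_admissible (sqrt (r1\<^sup>2 - (norm y1)\<^sup>2)) (sqrt (r2\<^sup>2 - (norm y2)\<^sup>2))
                         (sqrt (r3\<^sup>2 - (norm y3)\<^sup>2))}"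

text \<open>Projection of S(y3) onto the y1 coordinate; its Lebesgue measure is the
  (d-k)-dimensional measure of S(y3).\<close>
definition S_proj :: "real \<Rightarrow> real \<Rightarrow> real \<Rightarrow> 'a::euclidean_space \<Rightarrow> 'a set" where
  "S_proj r1 r2 r3 y3 = fst ` S_set r1 r2 r3 y3"

end

theory Submission
  imports Defs
begin

definition HH :: "real \<Rightarrow> real \<Rightarrow> real \<Rightarrow> real" where
 "HH A B C = 2*A*B+2*B*C+2*C*A-A*A-B*B-C*C"

lemma HH_factor: "HH (s1^2) (s2^2) (s3^2) = (s1+s2+s3)*(s2+s3-s1)*(s1+s3-s2)*(s1+s2-s3)"
  unfolding HH_def by algebra

lemma HH_ident:
  assumes "R2 = R1 + R3 - 2*t*R3"
  shows "R3 * HH (R1 - t^2*a2) (R2 - (1-t)^2*a2) (R3 - a2) = (R3 - a2) * HH R1 R2 R3"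
  unfolding HH_def assms by algebra

lemma HH_alt: "HH R1 R2 R3 = 4*R1*R3 - (R1+R3-R2)^2" "HH R1 R2 R3 = 4*R2*R3 - (R2+R3-R1)^2"
  unfolding HH_def by algebra+

lemma adm_HH: assumes "strictly_admissible r1 r2 r3" shows "HH (r1^2) (r2^2) (r3^2) > 0"
  using assms unfolding HH_factor strictly_admissible_def by simp

lemma HH_adm:
  assumes "s1 > 0" "s2 > 0" "s3 > 0" "HH (s1^2) (s2^2) (s3^2) > 0"
  shows "strictly_admissible s1 s2 s3"
proof -
  have h: "0 < (s1+s2+s3)*(s2+s3-s1)*(s1+s3-s2)*(s1+s2-s3)" using assms(4) HH_factor by simp
  have "s1+s2-s3 > 0"
  proof (rule ccontr)
    assume "\<not> ?thesis"
    hence "(s1+s2+s3)*(s2+s3-s1)*(s1+s3-s2)*(s1+s2-s3) \<le> 0" using assms(1-3)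
      by (intro mult_nonneg_nonpos) auto
    with h show False by simp
  qed
  moreover have "s2+s3-s1 > 0"
  proof (rule ccontr)
    assume "\<not> ?thesis"
    hence "(s1+s2+s3)*(s1+s3-s2)*(s1+s2-s3)*(s2+s3-s1) \<le> 0" using assms(1-3)
      by (intro mult_nonneg_nonpos) auto
    with h show False by (simp add: mult_ac)
  qed
  moreover have "s1+s3-s2 > 0"
  proof (rule ccontr)
    assume "\<not> ?thesis"
    hence "(s1+s2+s3)*(s2+s3-s1)*(s1+s2-s3)*(s1+s3-s2) \<le> 0" using assms(1-3)
      by (intro mult_nonneg_nonpos) auto
    with h show False by (simp add: mult_ac)
  qed
  ultimately show ?thesis using assms unfolding strictly_admissible_def by linarith
qed

definition PP :: "real \<Rightarrow> real \<Rightarrow> real \<Rightarrow> 'a::euclidean_space \<Rightarrow> 'a \<Rightarrow> bool" where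
  "PP r1 r2 r3 y3 x \<longleftrightarrow> norm x < r1 \<and> norm (-x-y3) < r2 \<and>
     strictly_admissible (sqrt (r1\<^sup>2 - (norm x)\<^sup>2)) (sqrt (r2\<^sup>2 - (norm (-x-y3))\<^sup>2))
                         (sqrt (r3\<^sup>2 - (norm y3)\<^sup>2))"

lemma S_set_mem: "(y1, y2) \<in> S_set r1 r2 r3 y3 \<longleftrightarrow> y2 = -y1-y3 \<and> PP r1 r2 r3 y3 y1"
proof -
  have e: "y1 + y2 + y3 = 0 \<longleftrightarrow> y2 = -y1-y3"
  proof
    assume h: "y1 + y2 + y3 = 0"
    have "y2 = (y1 + y2 + y3) - y1 - y3" by (simp add: algebra_simps)
    thus "y2 = -y1-y3" using h by simp
  qed simp
  show ?thesis unfolding S_set_def PP_def mem_Collect_eq prod.case e by blast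
qed

lemma S_proj_eq: "S_proj r1 r2 r3 y3 = {x. PP r1 r2 r3 y3 x}"
proof (intro set_eqI iffI)
  fix x assume "x \<in> S_proj r1 r2 r3 y3"
  then obtain z where "z \<in> S_set r1 r2 r3 y3" "x = fst z" unfolding S_proj_def by blast
  thus "x \<in> {x. PP r1 r2 r3 y3 x}" by (cases z) (auto simp: S_set_mem)
next
  fix x assume "x \<in> {x. PP r1 r2 r3 y3 x}"
  hence "(x, -x-y3) \<in> S_set r1 r2 r3 y3" by (simp add: S_set_mem)
  thus "x \<in> S_proj r1 r2 r3 y3" unfolding S_proj_def by force
qed

lemma S_nonempty:
  fixes y3 :: "'a::euclidean_space"
  assumes adm: "strictly_admissible r1 r2 r3" and y3: "norm y3 < r3"
  shows "\<exists>x. PP r1 r2 r3 y3 x"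
proof -
  have r: "r1 > 0" "r2 > 0" "r3 > 0" using adm unfolding strictly_admissible_def by auto
  define a where "a = norm y3"
  define t where "t = (r1^2 + r3^2 - r2^2) / (2 * r3^2)"
  have t2: "r2^2 = r1^2 + r3^2 - 2*t*r3^2" unfolding t_def using r by (simp add: field_simps)
  have H: "HH (r1^2) (r2^2) (r3^2) > 0" using adm_HH[OF adm] .
  have a0: "0 \<le> a" "a < r3" using y3 a_def by auto
  have a2: "a^2 < r3^2" using a0 by (simp add: power_strict_mono)
  define x where "x = - (t *\<^sub>R y3)"
  have nx: "norm x ^2 = t^2 * a^2" unfolding x_def a_def by (simp add: power_mult_distrib)
  have ny: "norm (-x-y3) ^2 = (1-t)^2 * a^2"
  proof -
    have "-x-y3 = (t - 1) *\<^sub>R y3" unfolding x_def by (simp add: algebra_simps)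
    thus ?thesis unfolding a_def by (simp add: power_mult_distrib power2_commute)
  qed
  have "4*(r1^2)*(r3^2) - (r1^2+r3^2-r2^2)^2 > 0" using H HH_alt(1) by simp
  moreover have "(r1^2+r3^2-r2^2)^2 = 4*t^2*(r3^2)^2"
  proof -
    have "r1^2+r3^2-r2^2 = 2*t*r3^2" using t2 by simp
    hence "(r1^2+r3^2-r2^2)^2 = (2*t*r3^2)^2" by simp
    thus ?thesis by (simp add: power_mult_distrib)
  qed
  ultimately have "4*(r1^2)*(r3^2) - 4*t^2*(r3^2)^2 > 0" by linarith
  hence "r3^2 * (4*r1^2 - 4*t^2*r3^2) > 0" by (simp add: algebra_simps power2_eq_square)
  hence k1: "t^2*r3^2 < r1^2" using r by (simp add: zero_less_mult_iff)
  have "4*(r2^2)*(r3^2) - (r2^2+r3^2-r1^2)^2 > 0" using H HH_alt(2) by simp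
  moreover have "(r2^2+r3^2-r1^2)^2 = 4*(1-t)^2*(r3^2)^2"
  proof -
    have "r2^2+r3^2-r1^2 = 2*(1-t)*r3^2" using t2 by (simp add: algebra_simps)
    hence "(r2^2+r3^2-r1^2)^2 = (2*(1-t)*r3^2)^2" by (simp only:)
    also have "\<dots> = 4*(1-t)^2*(r3^2)^2" by (simp only: power_mult_distrib) simp
    finally show ?thesis .
  qed
  ultimately have "4*(r2^2)*(r3^2) - 4*(1-t)^2*(r3^2)^2 > 0" by linarith
  hence "r3^2 * (4*r2^2 - 4*(1-t)^2*r3^2) > 0" by (simp add: algebra_simps power2_eq_square)
  hence k2: "(1-t)^2*r3^2 < r2^2" using r by (simp add: zero_less_mult_iff)
  have A1: "t^2*a^2 < r1^2" using k1 a2 by (meson le_less_trans less_imp_le mult_left_mono zero_le_power2)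
  have A2: "(1-t)^2*a^2 < r2^2" using k2 a2 by (meson le_less_trans less_imp_le mult_left_mono zero_le_power2)
  have n1: "norm x < r1" using A1 nx r by (metis power_less_imp_less_base less_imp_le)
  have n2: "norm (-x-y3) < r2" using A2 ny r by (metis power_less_imp_less_base less_imp_le)
  have s1: "(sqrt (r1^2 - norm x ^2))^2 = r1^2 - t^2*a^2" using nx A1 by simp
  have s2: "(sqrt (r2^2 - norm (-x-y3) ^2))^2 = r2^2 - (1-t)^2*a^2" using ny A2 by simp
  have s3: "(sqrt (r3^2 - norm y3 ^2))^2 = r3^2 - a^2" using a2 a_def by simp
  have "r3^2 * HH (r1^2 - t^2*a^2) (r2^2 - (1-t)^2*a^2) (r3^2 - a^2) = (r3^2 - a^2) * HH (r1^2) (r2^2) (r3^2)"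
    by (rule HH_ident[OF t2])
  also have "\<dots> > 0" using a2 H by simp
  finally have "HH (r1^2 - t^2*a^2) (r2^2 - (1-t)^2*a^2) (r3^2 - a^2) > 0"
    using r by (simp add: zero_less_mult_iff)
  hence "strictly_admissible (sqrt (r1^2 - norm x ^2)) (sqrt (r2^2 - norm (-x-y3) ^2)) (sqrt (r3^2 - norm y3 ^2))"
    using A1 A2 a2 nx ny a_def by (intro HH_adm) (simp_all only: s1 s2 s3, auto)
  thus ?thesis using n1 n2 unfolding PP_def by blast
qed


lemma open_PP: "open {x. PP r1 r2 r3 (y3::'a::euclidean_space) x}"
  unfolding PP_def strictly_admissible_def
  by (intro open_Collect_conj open_Collect_less continuous_intros)

lemma open_W: "open {z :: ('a::euclidean_space \<times> real \<times> real \<times> real) \<times> 'a.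
   PP (fst (snd (fst z))) (fst (snd (snd (fst z)))) (snd (snd (snd (fst z)))) (fst (fst z)) (snd z)}"
  unfolding PP_def strictly_admissible_def
  by (intro open_Collect_conj open_Collect_less continuous_intros)

lemma bounded_PP: "{x. PP r1 r2 r3 (y3::'a::euclidean_space) x} \<subseteq> cball 0 \<bar>r1\<bar>"
  unfolding PP_def by auto

lemma lmeas_PP: "{x. PP r1 r2 r3 (y3::'a::euclidean_space) x} \<in> lmeasurable"
  by (rule lmeasurable_open[OF bounded_subset[OF bounded_cball bounded_PP] open_PP])

lemma open_pos:
  fixes S :: "'a::euclidean_space set"
  assumes "open S" "x \<in> S"
  shows "0 < emeasure lebesgue S"
proof -
  obtain e where e: "0 < e" "ball x e \<subseteq> S" using assms openE by blast
  then obtain a b where box: "x \<in> box a b" "box a b \<subseteq> S"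
    by (metis rational_boxes order_trans)
  then have "0 < emeasure lebesgue (box a b)"
    by (auto simp: emeasure_lborel_box_eq mem_box algebra_simps intro!: prod_pos)
  also have "\<dots> \<le> emeasure lebesgue S"
    using assms box by (auto intro!: emeasure_mono)
  finally show ?thesis .
qed


definition UU :: "('a::euclidean_space \<times> real \<times> real \<times> real) \<Rightarrow> 'a set" where
  "UU q = {x. PP (fst (snd q)) (fst (snd (snd q))) (snd (snd (snd q))) (fst q) x}"

lemma lsc:
  fixes p :: "'a::euclidean_space \<times> real \<times> real \<times> real"
  assumes c: "c < measure lebesgue (UU p)"
  shows "\<forall>\<^sub>F q in at p within D. c < measure lebesgue (UU q)"
proof -
  let ?S = "UU p"
  have Sm: "?S \<in> lmeasurable" unfolding UU_def by (rule lmeas_PP)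
  have "?S \<in> sets lebesgue" using Sm by (simp add: fmeasurable_def)
  then obtain T where T: "closed T" "T \<subseteq> ?S" "?S - T \<in> lmeasurable"
      "emeasure lebesgue (?S - T) < ennreal (measure lebesgue ?S - c)"
    using sets_lebesgue_inner_closed[of ?S "measure lebesgue ?S - c"] c by auto
  have bT: "bounded T" using T(2) bounded_subset[OF bounded_cball bounded_PP] unfolding UU_def
    by (meson bounded_subset)
  have cT: "compact T" using bT T(1) by (simp add: compact_eq_bounded_closed)
  have Tm: "T \<in> lmeasurable" using cT by (rule lmeasurable_compact)
  have "measure lebesgue (?S - T) < measure lebesgue ?S - c"
    using T(4) emeasure_eq_measure2[OF T(3)] c
    by (metis ennreal_less_iff measure_nonneg)
  moreover have "measure lebesgue (?S - T) = measure lebesgue ?S - measure lebesgue T"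
    using Sm Tm T(2) by (intro measure_Diff) (auto simp: fmeasurable_def)
  ultimately have cT2: "c < measure lebesgue T" by simp
  have "{p} \<times> T \<subseteq> {z :: ('a \<times> real \<times> real \<times> real) \<times> 'a.
     PP (fst (snd (fst z))) (fst (snd (snd (fst z)))) (snd (snd (snd (fst z)))) (fst (fst z)) (snd z)}"
    using T(2) unfolding UU_def by auto
  from Elementary_Topology.tube_lemma[OF cT open_W this] obtain X0 where X0: "p \<in> X0" "open X0"
    "X0 \<times> T \<subseteq> {z :: ('a \<times> real \<times> real \<times> real) \<times> 'a.
     PP (fst (snd (fst z))) (fst (snd (snd (fst z)))) (snd (snd (snd (fst z)))) (fst (fst z)) (snd z)}"
    by blast
  have "c < measure lebesgue (UU q)" if "q \<in> X0" for q
  proof -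
    have "T \<subseteq> UU q" using X0(3) that unfolding UU_def by auto
    hence "measure lebesgue T \<le> measure lebesgue (UU q)"
      using Tm lmeas_PP[of "fst (snd q)" "fst (snd (snd q))" "snd (snd (snd q))" "fst q"]
      by (intro measure_mono_fmeasurable) (auto simp: UU_def)
    thus ?thesis using cT2 by simp
  qed
  thus ?thesis unfolding eventually_at_topological using X0 by blast
qed

theorem lemma3p1:
  fixes d k :: nat
  assumes "2 \<le> d" and "1 \<le> k" and "k \<le> d - 1"
    and "CARD('n::finite) = d - k"
  shows "(\<forall>r1 r2 r3 (y3 :: real ^ 'n). strictly_admissible r1 r2 r3 \<and> norm y3 < r3 \<longrightarrow>
            S_set r1 r2 r3 y3 \<noteq> {} \<and> emeasure lebesgue (S_proj r1 r2 r3 y3) > 0)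
    \<and> (let D = {(y3 :: real ^ 'n, (r1, r2, r3)). strictly_admissible r1 r2 r3 \<and> norm y3 < r3};
           F = (\<lambda>(y3 :: real ^ 'n, (r1, r2, r3)). measure lebesgue (S_proj r1 r2 r3 y3))
       in \<forall>p\<in>D. \<forall>c. c < F p \<longrightarrow> (\<forall>\<^sub>F q in at p within D. c < F q))"
proof -
  have P1: "\<forall>r1 r2 r3 (y3 :: real ^ 'n). strictly_admissible r1 r2 r3 \<and> norm y3 < r3 \<longrightarrow>
            S_set r1 r2 r3 y3 \<noteq> {} \<and> emeasure lebesgue (S_proj r1 r2 r3 y3) > 0"
  proof (intro allI impI)
    fix r1 r2 r3 and y3 :: "real ^ 'n"
    assume h: "strictly_admissible r1 r2 r3 \<and> norm y3 < r3"
    obtain x where x: "PP r1 r2 r3 y3 x" using S_nonempty h by blast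
    have "(x, -x-y3) \<in> S_set r1 r2 r3 y3" by (simp add: S_set_mem x)
    moreover have "0 < emeasure lebesgue (S_proj r1 r2 r3 y3)"
      unfolding S_proj_eq using open_pos[OF open_PP] x by blast
    ultimately show "S_set r1 r2 r3 y3 \<noteq> {} \<and> emeasure lebesgue (S_proj r1 r2 r3 y3) > 0" by auto
  qed
  have Feq: "(\<lambda>(y3 :: real ^ 'n, (r1, r2, r3)). measure lebesgue (S_proj r1 r2 r3 y3)) = (\<lambda>q. measure lebesgue (UU q))"
    by (intro ext) (auto simp: UU_def S_proj_eq split: prod.splits)
  show ?thesis unfolding Let_def Feq using P1 lsc by blast
qed

end
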